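(* At a long-run equilibrium under perimeter control of the monocentric city model described in the context, in which the downtown area and the suburban interval $[0,x_f]$ are occupied with positive land rent (and $r_s(x_f)=0$ at the city boundary $x_f$): (i) $$N_d^{p*}=\frac{1}{\mu}\{y_d\}^{\frac{1-\mu}{\mu}}\left(w-C_s^{bp*}\right)^{-\frac1\mu}\left(r_s(0)+r_A\right)A_d,$$ $$N_s^{p*}(x)=\frac{1}{\mu}\{w-C_s^{bp*}-\alpha\tau x\}^{\frac{1-\mu}{\mu}}\left(w-C_s^{bp*}\right)^{-\frac1\mu}\left(r_s(0)+r_A\right)A_s(x);$$ (ii) $$x_f=\frac{w-C_s^{bp*}}{\alpha\tau}\left(\{r_A\}^{-\mu}-\{r_s(0)+r_A\}^{-\mu}\right)\{r_A\}^{\mu};$$ (iii) $r_s(0)$ is determined by $\int_0^{x_f}N_s^{p*}(x)\,dx=N-N_d^{p*}$.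
   Context: Monocentric city: downtown land $A_d>0$ (all jobs) and suburban locations $x\ge0$ with land $A_s(x)>0$; absentee landlords; $N$ homogeneous commuters ($N_d$ downtown, density $N_s(x)$ at $x$). Downtown commuting cost $\alpha T_d$; under perimeter control a suburban commuter at $x$ has commuting cost $C_s^{bp*}+\alpha\tau x$, where $C_s^{bp*}$ is the short-run equilibrium bathtub cost of downtown car traffic under perimeter control, $\alpha>0$ the value of time, $\tau=1/v_f$. Income $w$; utility $z^{1-\mu}a^{\mu}$, $\mu\in(0,1)$; budget $w=z+(r+r_A)a+C$, agricultural rent $r_A>0$, downtown rent $r_d+r_A$, rent $r_s(x)+r_A$ at $x$. Net incomes $y_d=w-\alpha T_d$, $y_s^p(x)=w-C_s^{bp*}-\alpha\tau x$; lot sizes $a=\mu y/(r+r_A)$; indirect utility $U=(1-\mu)^{1-\mu}\mu^\mu y(r+r_A)^{-\mu}$. Long-run equilibrium (utility $U^*$): $U_d=U^*$ if $N_d>0$ ($\le$ otherwise); $U_s(x)=U^*$ if $N_s(x)>0$ ($\le$ otherwise); land clearing $a_dN_d=A_d$ if $r_d>0$ ($\le$ if $r_d=0$), $a_s(x)N_s(x)=A_s(x)$ if $r_s(x)>0$ ($\le$ if $r_s(x)=0$); $N_d+\int_0^\infty N_s(x)dx=N$. *)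

theory Defs
  imports "HOL-Analysis.Analysis"
begin

text \<open>Indirect utility for net income y and gross land rent R = r + r_A.\<close>
definition indirect_utility :: "real \<Rightarrow> real \<Rightarrow> real \<Rightarrow> real" where
  "indirect_utility mu y R = (1 - mu) powr (1 - mu) * mu powr mu * y * R powr (- mu)"

definition lot_size :: "real \<Rightarrow> real \<Rightarrow> real \<Rightarrow> real" where
  "lot_size mu y R = mu * y / R"

definition y_down :: "real \<Rightarrow> real \<Rightarrow> real \<Rightarrow> real" where
  "y_down w alpha Td = w - alpha * Td"

definition y_sub :: "real \<Rightarrow> real \<Rightarrow> real \<Rightarrow> real \<Rightarrow> real \<Rightarrow> real" where
  "y_sub w Cs alpha tau x = w - Cs - alpha * tau * x"

text \<open>Long-run equilibrium under perimeter control (utility level Ustar).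
  Ns and rs are the suburban population density and (net) land rent, defined on x \<ge> 0.\<close>
definition lr_equilibrium_pc ::
  "real \<Rightarrow> real \<Rightarrow> real \<Rightarrow> real \<Rightarrow> real \<Rightarrow> real \<Rightarrow> real \<Rightarrow> real \<Rightarrow> (real \<Rightarrow> real)
   \<Rightarrow> real \<Rightarrow> real \<Rightarrow> (real \<Rightarrow> real) \<Rightarrow> real \<Rightarrow> (real \<Rightarrow> real) \<Rightarrow> real \<Rightarrow> bool" where
  "lr_equilibrium_pc mu alpha tau w Cs Td rA Ad As N Nd Ns rd rs Ustar \<longleftrightarrow>
     Nd \<ge> 0 \<and> rd \<ge> 0 \<and> (\<forall>x\<ge>0. Ns x \<ge> 0 \<and> rs x \<ge> 0) \<and>
     \<comment> \<open>utility conditions, downtown\<close>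
     indirect_utility mu (y_down w alpha Td) (rd + rA) \<le> Ustar \<and>
     (Nd > 0 \<longrightarrow> indirect_utility mu (y_down w alpha Td) (rd + rA) = Ustar) \<and>
     \<comment> \<open>utility conditions, suburbs\<close>
     (\<forall>x\<ge>0. indirect_utility mu (y_sub w Cs alpha tau x) (rs x + rA) \<le> Ustar \<and>
        (Ns x > 0 \<longrightarrow> indirect_utility mu (y_sub w Cs alpha tau x) (rs x + rA) = Ustar)) \<and>
     \<comment> \<open>land clearing, downtown\<close>
     (rd > 0 \<longrightarrow> lot_size mu (y_down w alpha Td) (rd + rA) * Nd = Ad) \<and>
     (rd = 0 \<longrightarrow> lot_size mu (y_down w alpha Td) (rd + rA) * Nd \<le> Ad) \<and>
     \<comment> \<open>land clearing, suburbs\<close>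
     (\<forall>x\<ge>0. (rs x > 0 \<longrightarrow> lot_size mu (y_sub w Cs alpha tau x) (rs x + rA) * Ns x = As x) \<and>
        (rs x = 0 \<longrightarrow> lot_size mu (y_sub w Cs alpha tau x) (rs x + rA) * Ns x \<le> As x)) \<and>
     \<comment> \<open>population constraint N_d + int_0^infty N_s = N\<close>
     (Ns has_integral (N - Nd)) {0..}"

end

theory Submission
  imports Defs
begin

lemma solveR:
  fixes mu y y0 R R0 :: real
  assumes "mu > 0" "y > 0" "y0 > 0" "R > 0" "R0 > 0"
    and e: "y * R powr (-mu) = y0 * R0 powr (-mu)"
  shows "R = y powr (1/mu) * y0 powr (-1/mu) * R0"
proof -
  have "R powr (-mu) = (y0 / y) * R0 powr (-mu)" using e assms by (simp add: field_simps)
  hence "(R powr (-mu)) powr (-1/mu) = ((y0 / y) * R0 powr (-mu)) powr (-1/mu)" by simp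
  also have "... = (y0 / y) powr (-1/mu) * (R0 powr (-mu)) powr (-1/mu)"
    using assms by (intro powr_mult)
  also have "... = y powr (1/mu) * y0 powr (-1/mu) * R0"
    using assms by (simp add: powr_powr powr_divide powr_minus_divide field_simps)
  finally show ?thesis using assms by (simp add: powr_powr)
qed

lemma solveN:
  fixes mu y y0 R R0 A N :: real
  assumes "mu > 0" "y > 0" "y0 > 0" "R > 0" "R0 > 0"
    and e: "y * R powr (-mu) = y0 * R0 powr (-mu)"
    and l: "mu * y / R * N = A"
  shows "N = (1 / mu) * y powr ((1 - mu) / mu) * y0 powr (- 1 / mu) * R0 * A"
proof -
  have R: "R = y powr (1/mu) * y0 powr (-1/mu) * R0" using solveR[OF assms(1-5) e] .
  have N: "N = A * R / (mu * y)" using l assms by (simp add: field_simps)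
  have "y powr (1/mu) / y = y powr ((1 - mu) / mu)"
    using assms by (simp add: powr_diff diff_divide_distrib)
  thus ?thesis unfolding N R using assms by (simp add: field_simps)
qed

lemma pos_y:
  fixes mu y R N :: real
  assumes "mu > 0" "R > 0" "N > 0" "mu * y / R * N > 0"
  shows "y > 0"
proof (rule ccontr)
  assume "\<not> y > 0"
  hence "mu * y \<le> 0" using assms by (simp add: mult_nonneg_nonpos)
  hence "mu * y / R \<le> 0" using assms by (simp add: divide_nonpos_pos)
  hence "mu * y / R * N \<le> 0" using assms(3) by (intro mult_nonpos_nonneg) auto
  thus False using assms(4) by linarith
qed

theorem lemma5:
  fixes mu alpha tau w Cs Td rA Ad N Nd rd Ustar xf :: real
    and As Ns rs :: "real \<Rightarrow> real"
  assumes mu: "0 < mu" "mu < 1"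
    and alpha: "alpha > 0" and tau: "tau > 0" and rA: "rA > 0"
    and Ad: "Ad > 0" and As: "\<forall>x\<ge>0. As x > 0"
    and eq: "lr_equilibrium_pc mu alpha tau w Cs Td rA Ad As N Nd Ns rd rs Ustar"
    and down_occ: "Nd > 0" "rd > 0"
    and xf: "xf > 0"
    and sub_occ: "\<forall>x\<in>{0..xf}. Ns x > 0"
    and sub_rent: "\<forall>x\<in>{0..<xf}. rs x > 0"
    and boundary: "rs xf = 0"
    and beyond: "\<forall>x>xf. Ns x = 0"
  shows
    "(Nd = (1 / mu) * (w - alpha * Td) powr ((1 - mu) / mu) * (w - Cs) powr (- 1 / mu)
            * (rs 0 + rA) * Ad) \<and>
    (\<forall>x\<in>{0..<xf}. Ns x = (1 / mu) * (w - Cs - alpha * tau * x) powr ((1 - mu) / mu)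
            * (w - Cs) powr (- 1 / mu) * (rs 0 + rA) * As x) \<and>
    xf = (w - Cs) / (alpha * tau) * (rA powr (- mu) - (rs 0 + rA) powr (- mu)) * rA powr mu \<and>
    ((\<lambda>x. (1 / mu) * (w - Cs - alpha * tau * x) powr ((1 - mu) / mu)
            * (w - Cs) powr (- 1 / mu) * (rs 0 + rA) * As x) has_integral
       (N - (1 / mu) * (w - alpha * Td) powr ((1 - mu) / mu) * (w - Cs) powr (- 1 / mu)
            * (rs 0 + rA) * Ad)) {0..xf}"
proof -
  define k where "k = (1 - mu) powr (1 - mu) * mu powr mu"
  have k: "k > 0" using mu unfolding k_def by simp
  note E = eq[unfolded lr_equilibrium_pc_def]
  have EUd: "Nd > 0 \<longrightarrow> indirect_utility mu (y_down w alpha Td) (rd + rA) = Ustar" using E by blast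
  have EUs: "\<And>x. x \<ge> 0 \<Longrightarrow> Ns x > 0 \<Longrightarrow> indirect_utility mu (y_sub w Cs alpha tau x) (rs x + rA) = Ustar"
    using E by blast
  have ELd: "rd > 0 \<longrightarrow> lot_size mu (y_down w alpha Td) (rd + rA) * Nd = Ad" using E by blast
  have ELs: "\<And>x. x \<ge> 0 \<Longrightarrow> rs x > 0 \<Longrightarrow> lot_size mu (y_sub w Cs alpha tau x) (rs x + rA) * Ns x = As x"
    using E by blast
  have IU: "\<And>y R. indirect_utility mu y R = k * (y * R powr (-mu))"
    unfolding indirect_utility_def k_def by simp
  define y0 where "y0 = w - Cs"
  define R0 where "R0 = rs 0 + rA"
  have rs0: "rs 0 > 0" using sub_rent xf by auto
  have R0: "R0 > 0" using rs0 rA unfolding R0_def by simp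
  have Ns0: "Ns 0 > 0" using sub_occ xf by auto
  have U0: "Ustar = k * (y0 * R0 powr (-mu))"
    using EUs[of 0] Ns0 unfolding IU y_sub_def y0_def R0_def by simp
  have L0: "mu * y0 / R0 * Ns 0 = As 0"
    using ELs[of 0] rs0 unfolding lot_size_def y_sub_def y0_def R0_def by simp
  have y0: "y0 > 0"
  proof -
    have "mu * y0 / R0 * Ns 0 > 0" using L0 As by auto
    thus ?thesis using pos_y[OF mu(1) R0 Ns0] by blast
  qed
  define yd where "yd = w - alpha * Td"
  define Rd where "Rd = rd + rA"
  have Rd: "Rd > 0" using down_occ rA unfolding Rd_def by simp
  have Ud: "k * (yd * Rd powr (-mu)) = Ustar"
    using EUd down_occ unfolding IU y_down_def yd_def Rd_def by simp
  have Ld: "mu * yd / Rd * Nd = Ad"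
    using ELd down_occ unfolding lot_size_def y_down_def yd_def Rd_def by simp
  have yd: "yd > 0"
  proof -
    have "mu * yd / Rd * Nd > 0" using Ld Ad by auto
    thus ?thesis using pos_y[OF mu(1) Rd down_occ(1)] by blast
  qed
  have ed: "yd * Rd powr (-mu) = y0 * R0 powr (-mu)" using Ud U0 k by simp
  have P1: "Nd = (1 / mu) * yd powr ((1 - mu) / mu) * y0 powr (- 1 / mu) * R0 * Ad"
    using solveN[OF mu(1) yd y0 Rd R0 ed Ld] .
  have P2: "Ns x = (1 / mu) * (w - Cs - alpha * tau * x) powr ((1 - mu) / mu)
            * (w - Cs) powr (- 1 / mu) * (rs 0 + rA) * As x" if x: "x \<in> {0..<xf}" for x
  proof -
    define yx where "yx = w - Cs - alpha * tau * x"
    define Rx where "Rx = rs x + rA"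
    have rsx: "rs x > 0" using sub_rent x by auto
    have Rx: "Rx > 0" using rsx rA unfolding Rx_def by simp
    have Nsx: "Ns x > 0" using sub_occ x by auto
    have Ux: "k * (yx * Rx powr (-mu)) = Ustar"
      using EUs[of x] Nsx x unfolding IU y_sub_def yx_def Rx_def by simp
    have Lx: "mu * yx / Rx * Ns x = As x"
      using ELs[of x] rsx x unfolding lot_size_def y_sub_def yx_def Rx_def by simp
    have yx: "yx > 0"
    proof -
      have "mu * yx / Rx * Ns x > 0" using Lx As x by auto
      thus ?thesis using pos_y[OF mu(1) Rx Nsx] by blast
    qed
    have ex: "yx * Rx powr (-mu) = y0 * R0 powr (-mu)" using Ux U0 k by simp
    show ?thesis using solveN[OF mu(1) yx y0 Rx R0 ex Lx]
      unfolding yx_def y0_def R0_def .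
  qed
  have Nsf: "Ns xf > 0" using sub_occ xf by auto
  have Uf: "k * ((y0 - alpha * tau * xf) * rA powr (-mu)) = Ustar"
    using EUs[of xf] Nsf xf boundary unfolding IU y_sub_def y0_def by simp
  have ef: "(y0 - alpha * tau * xf) * rA powr (-mu) = y0 * R0 powr (-mu)" using Uf U0 k by simp
  have "rA powr (-mu) * rA powr mu = 1" using rA by (simp add: powr_add[symmetric])
  hence "y0 - alpha * tau * xf = y0 * R0 powr (-mu) * rA powr mu"
    using ef by (metis mult.assoc mult.right_neutral)
  hence "alpha * tau * xf = y0 * (rA powr (- mu) - R0 powr (- mu)) * rA powr mu"
    using \<open>rA powr (-mu) * rA powr mu = 1\<close> by (simp add: algebra_simps)
  hence P3: "xf = y0 / (alpha * tau) * (rA powr (- mu) - R0 powr (- mu)) * rA powr mu"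
    using alpha tau by (simp add: field_simps)
  have I0: "(Ns has_integral (N - Nd)) {0..}" using E by blast
  have "((\<lambda>x. if x \<in> {0..} then Ns x else 0) has_integral (N - Nd)) UNIV"
    using has_integral_restrict_UNIV[THEN iffD2, OF I0] .
  moreover have "(\<lambda>x. if x \<in> {0..} then Ns x else 0) = (\<lambda>x. if x \<in> {0..xf} then Ns x else 0)"
    using beyond by (auto simp: fun_eq_iff)
  ultimately have "((\<lambda>x. if x \<in> {0..xf} then Ns x else 0) has_integral (N - Nd)) UNIV" by simp
  hence I1: "(Ns has_integral (N - Nd)) {0..xf}" by (rule has_integral_restrict_UNIV[THEN iffD1])
  let ?f = "\<lambda>x. (1 / mu) * (w - Cs - alpha * tau * x) powr ((1 - mu) / mu)
            * (w - Cs) powr (- 1 / mu) * (rs 0 + rA) * As x"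
  have I2: "(?f has_integral (N - Nd)) {0..xf}"
  proof (rule has_integral_spike[OF negligible_sing[of xf] _ I1])
    fix x assume "x \<in> {0..xf} - {xf}"
    thus "?f x = Ns x" using P2 by auto
  qed
  show ?thesis using P1 P2 P3 I2 unfolding yd_def y0_def R0_def by simp
qed

end
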